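(* Let $\beta \in \mathcal{P}$ and $\alpha \in E$ satisfy $\alpha^{q+1} = \beta^q + \beta^{q^2+q+1}$. Then the equation $X^{q+1} + \alpha X + \beta = 0$ has $q+1$ roots in $E$, and all of them lie in $\mathcal{P}$.
   Context: Let $q = 2^m$ with $m \ge 1$, and let $E = \mathbb{F}_{q^4}$. Define $\mathcal{P} = \{x \in E \mid x^{q^3+q^2+q+1} = 1\}$. *)

theory Defs
  imports Main
begin

definition P_set :: "nat \<Rightarrow> 'a::field set" where
  "P_set q = {x. x ^ (q^3 + q^2 + q + 1) = 1}"

end

theory Submission
  imports Defs "HOL-Computational_Algebra.Polynomial"
begin


lemma char2:
  assumes "even (card (UNIV :: 'a::{field,finite} set))"
  shows "(2::'a) = 0"
proof (rule ccontr)
  assume two: "(2::'a) \<noteq> 0"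
  have neq: "x \<noteq> - x" if "x \<noteq> 0" for x :: 'a
  proof
    assume "x = - x"
    then have "2 * x = 0" by (metis add_eq_0_iff mult_2)
    with two that show False by simp
  qed
  define C where "C = (\<lambda>x::'a. {x, -x}) ` (UNIV - {0})"
  have U: "\<Union>C = UNIV - {0}" unfolding C_def by auto
  have f1: "finite C" unfolding C_def by simp
  have f2: "\<forall>c\<in>C. card c = 2"
    proof
      fix c assume "c \<in> C"
      then obtain x where x: "x \<noteq> 0" "c = {x, -x}" unfolding C_def by auto
      then show "card c = 2" using neq[OF x(1)] by simp
    qed
  have f3: "\<forall>c1\<in>C. \<forall>c2\<in>C. c1 \<noteq> c2 \<longrightarrow> c1 \<inter> c2 = {}"
      unfolding C_def by auto
  have "2 * card C = card (\<Union>C)"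
    using card_partition[of C 2] f1 f2 f3 by simp
  also have "\<dots> = card (UNIV :: 'a set) - 1" using U by (simp add: card_Diff_singleton)
  finally have "even (card (UNIV :: 'a set) - 1)" by (metis dvd_triv_left)
  moreover have "card (UNIV :: 'a set) > 0" by (simp add: card_gt_0_iff)
  ultimately show False using assms by simp
qed

lemma frob2:
  fixes x y :: "'a::field"
  assumes "(2::'a) = 0"
  shows "(x + y) ^ (2 ^ k) = x ^ (2 ^ k) + y ^ (2 ^ k)"
proof (induction k)
  case 0 then show ?case by simp
next
  case (Suc k)
  have sq: "(a + b) ^ 2 = a ^ 2 + b ^ 2" for a b :: 'a
  proof -
    have "(a + b) ^ 2 = a^2 + b^2 + 2 * a * b" by (simp add: power2_eq_square algebra_simps)
    then show ?thesis using assms by simp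
  qed
  have "(x + y) ^ (2 ^ Suc k) = ((x + y) ^ (2 ^ k)) ^ 2" by (simp add: power_mult[symmetric] mult.commute)
  also have "\<dots> = (x ^ (2 ^ k) + y ^ (2 ^ k)) ^ 2" using Suc by simp
  also have "\<dots> = x ^ (2 ^ Suc k) + y ^ (2 ^ Suc k)" by (simp add: sq power_mult[symmetric] mult.commute)
  finally show ?case .
qed

lemma fermat:
  fixes x :: "'a::{field,finite}"
  assumes "x \<noteq> 0"
  shows "x ^ (card (UNIV :: 'a set) - 1) = 1"
proof -
  define U where "U = (UNIV :: 'a set) - {0}"
  have fin: "finite U" by simp
  have img: "(\<lambda>y. x * y) ` U = U"
  proof
    show "(\<lambda>y. x * y) ` U \<subseteq> U" using assms unfolding U_def by auto
    show "U \<subseteq> (\<lambda>y. x * y) ` U"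
    proof
      fix z assume "z \<in> U"
      then have "inverse x * z \<in> U" "z = x * (inverse x * z)" using assms unfolding U_def by auto
      then show "z \<in> (\<lambda>y. x * y) ` U" by blast
    qed
  qed
  have inj: "inj_on (\<lambda>y. x * y) U" using assms by (auto simp: inj_on_def)
  have "prod (\<lambda>y. y) U = prod (\<lambda>y. y) ((\<lambda>y. x * y) ` U)" using img by simp
  also have "\<dots> = prod (\<lambda>y. x * y) U" using prod.reindex[OF inj] by simp
  also have "\<dots> = x ^ card U * prod (\<lambda>y. y) U" by (simp add: prod.distrib)
  finally have "x ^ card U * prod (\<lambda>y. y) U = 1 * prod (\<lambda>y. y) U" by simp
  moreover have "prod (\<lambda>y. y) U \<noteq> 0" using fin unfolding U_def by (simp add: prod_zero_iff)
  ultimately have "x ^ card U = 1" by simp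
  moreover have "card U = card (UNIV :: 'a set) - 1" unfolding U_def by (simp add: card_Diff_singleton)
  ultimately show ?thesis by simp
qed

lemma root_bound:
  fixes r :: "'a::field poly"
  assumes "degree r < n"
  shows "card {x. x ^ n + poly r x = 0} \<le> n"
proof -
  define p where "p = monom 1 n + r"
  have dp: "degree p = n" unfolding p_def
    using assms by (subst degree_add_eq_left) (auto simp: degree_monom_eq)
  have "p \<noteq> 0" using assms dp by (metis degree_0 not_less_zero)
  then have "card {x. poly p x = 0} \<le> degree p" by (rule card_poly_roots_bound)
  moreover have "poly p x = x ^ n + poly r x" for x unfolding p_def by (simp add: poly_monom)
  ultimately show ?thesis using dp by simp
qed

lemma fiber_card:
  fixes g :: "'a \<Rightarrow> 'b"
  assumes "finite A" and "\<And>x. x \<in> A \<Longrightarrow> card {y\<in>A. g y = g x} = k"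
  shows "card A = k * card (g ` A)"
proof -
  have "A = (\<Union>z\<in>g ` A. {y\<in>A. g y = z})" by auto
  then have "card A = card (\<Union>z\<in>g ` A. {y\<in>A. g y = z})" by simp
  also have "\<dots> = (\<Sum>z\<in>g ` A. card {y\<in>A. g y = z})"
    by (rule card_UN_disjoint) (use assms in auto)
  also have "\<dots> = (\<Sum>z\<in>g ` A. k)"
    by (rule sum.cong) (use assms in auto)
  finally show ?thesis by simp
qed



context
  fixes q m :: nat
  assumes m1: "m \<ge> 1" and qd: "q = 2^m" and cardE: "card (UNIV :: 'a::{field,finite} set) = q^4"
begin

lemma q2: "q \<ge> 2"
proof -
  have "(2::nat)^1 \<le> 2^m" using m1 by (rule power_increasing) simp
  then show ?thesis using qd by simp
qed

lemma evq: "even q" using qd m1 by (cases m) auto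

lemma two: "(2::'a) = 0"
proof (rule char2)
  show "even (card (UNIV :: 'a set))" using cardE evq by simp
qed

lemma addself: "(x::'a) + x = 0"
  using two by (metis mult_2 mult_zero_left)

lemma negself: "- (x::'a) = x"
  using addself by (metis add_eq_0_iff)

lemma sum0_iff: "(x::'a) + y = 0 \<longleftrightarrow> x = y"
  using addself negself by (metis add_eq_0_iff)

lemma frobk: "((x::'a) + y) ^ (q ^ k) = x ^ (q ^ k) + y ^ (q ^ k)"
proof -
  have "q ^ k = 2 ^ (m * k)" using qd by (simp add: power_mult)
  then show ?thesis using frob2[OF two] by simp
qed

lemma frob: "((x::'a) + y) ^ q = x ^ q + y ^ q"
  using frobk[of x y 1] by simp

lemma fq4: "(x::'a) ^ (q ^ 4) = x"
proof (cases "x = 0")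
  case True
  then show ?thesis using q2 by simp
next
  case False
  have "x ^ (q^4 - 1) = 1" using fermat[OF False] cardE by simp
  moreover have "q^4 = Suc (q^4 - 1)" using q2 by simp
  ultimately show ?thesis by (metis power_Suc mult_1_right mult.commute)
qed

lemma addcount:
  shows "card {t::'a. t ^ q = t} = q"
    and "\<And>u::'a. u ^ (q^3) + u ^ (q^2) + u ^ q + u = 0 \<Longrightarrow> \<exists>c. c ^ q + c = u"
proof -
  define F where "F = {t::'a. t ^ q = t}"
  define L where "L = (\<lambda>Y::'a. Y ^ q + Y)"
  define r where "r = (monom 1 (q^2) + monom 1 q + monom 1 1 :: 'a poly)"
  define Z where "Z = {z::'a. z ^ (q^3) + poly r z = 0}"
  have fib: "card {y\<in>UNIV. L y = L x} = card F" for x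
  proof -
    have "{y\<in>UNIV. L y = L x} = (\<lambda>t. x + t) ` F"
    proof (rule set_eqI, rule iffI)
      fix y assume "y \<in> {y\<in>UNIV. L y = L x}"
      then have e: "y ^ q + y = x ^ q + x" unfolding L_def by simp
      have "(y + x) ^ q = y + x"
        using e frob[of y x] by (metis add.assoc add.commute sum0_iff)
      moreover have "y = x + (y + x)" by (metis add.assoc add.commute addself add_0)
      ultimately show "y \<in> (\<lambda>t. x + t) ` F" unfolding F_def by blast
    next
      fix y assume "y \<in> (\<lambda>t. x + t) ` F"
      then obtain t where t: "t ^ q = t" "y = x + t" unfolding F_def by blast
      have "L y = x ^ q + t ^ q + x + t" unfolding L_def using t frob by (simp add: add.assoc)
      also have "\<dots> = L x" unfolding L_def using t(1) addself by (simp add: algebra_simps)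
      finally show "y \<in> {y\<in>UNIV. L y = L x}" by simp
    qed
    moreover have "inj (\<lambda>t. x + t)" by (simp add: inj_def)
    ultimately show ?thesis by (simp add: card_image inj_on_subset)
  qed
  have c1: "card (UNIV :: 'a set) = card F * card (range L)"
    by (rule fiber_card) (use fib in auto)
  have degr: "degree r < q^3"
  proof -
    have a: "q \<le> q^2" "1 \<le> q^2" using q2 by (auto simp: power2_eq_square)
    have "degree r \<le> q^2" unfolding r_def
      by (intro degree_add_le order.trans[OF degree_monom_le]) (use a in auto)
    moreover have "q^2 < q^3" using q2 by (intro power_strict_increasing) auto
    ultimately show ?thesis by linarith
  qed
  have cZ: "card Z \<le> q^3" unfolding Z_def by (rule root_bound[OF degr])
  have polyr: "poly r z = z ^ (q^2) + z ^ q + z" for z unfolding r_def by (simp add: poly_monom)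
  have LZ: "range L \<subseteq> Z"
  proof
    fix z assume "z \<in> range L"
    then obtain Y where z: "z = Y ^ q + Y" unfolding L_def by auto
    have p1: "(Y ^ q) ^ (q ^ k) = Y ^ (q ^ Suc k)" for k by (simp add: power_mult[symmetric] mult.commute)
    have "z ^ (q^3) + poly r z = (Y ^ q + Y) ^ (q^3) + (Y ^ q + Y) ^ (q^2) + (Y ^ q + Y) ^ q + (Y ^ q + Y)"
      using z polyr by (simp add: add.assoc)
    also have "\<dots> = (Y ^ (q^4) + Y ^ (q^3)) + (Y ^ (q^3) + Y ^ (q^2)) + (Y ^ (q^2) + Y ^ q) + (Y ^ q + Y)"
      using frobk[of "Y^q" Y 3] frobk[of "Y^q" Y 2] frob[of "Y^q" Y] p1[of 3] p1[of 2] p1[of 1]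
      by (simp add: power2_eq_square power_mult[symmetric])
    also have "\<dots> = Y ^ (q^4) + Y" by (simp add: algebra_simps two)
    also have "\<dots> = 0" using fq4 addself by simp
    finally show "z \<in> Z" unfolding Z_def by simp
  qed
  have cF: "card F \<le> q"
  proof -
    have "F = {t. t ^ q + poly (monom 1 1) t = 0}" unfolding F_def by (simp add: poly_monom sum0_iff)
    moreover have "degree (monom (1::'a) 1) < q" using q2 by (simp add: degree_monom_eq)
    ultimately show ?thesis using root_bound by metis
  qed
  have finZ: "finite Z" by simp
  have cR: "card (range L) \<le> q^3" using card_mono[OF finZ LZ] cZ by simp
  have qpos: "q > 0" using q2 by simp
  have "q * q^3 = card F * card (range L)" using c1 cardE by (simp add: power_Suc[symmetric] del: power_Suc)
  also have "\<dots> \<le> card F * q^3" using cR by simp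
  finally have "q \<le> card F" using qpos by simp
  then have eF: "card F = q" using cF by simp
  then show "card {t::'a. t ^ q = t} = q" unfolding F_def by simp
  have "q * q^3 = q * card (range L)" using c1 cardE eF by (simp add: power_Suc[symmetric] del: power_Suc)
  then have "card (range L) = q^3" using qpos by simp
  then have RZ: "range L = Z" using card_subset_eq[OF finZ LZ] cZ card_mono[OF finZ LZ] by simp
  fix u :: 'a
  assume "u ^ (q^3) + u ^ (q^2) + u ^ q + u = 0"
  then have "u \<in> Z" unfolding Z_def using polyr by (simp add: add.assoc)
  then have "u \<in> range L" using RZ by simp
  then show "\<exists>c. c ^ q + c = u" unfolding L_def by auto
qed

lemma natid: "(q + 1) * ((q - 1) * (q^2 + 1)) = q^4 - 1"
proof -
  obtain s where s: "q = Suc s" using q2 by (cases q) auto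
  show ?thesis unfolding s by (simp add: algebra_simps power2_eq_square power4_eq_xxxx)
qed

lemma mulcount: "card {z::'a. z ^ (q + 1) = 1} = q + 1"
proof -
  define M where "M = {z::'a. z ^ (q + 1) = 1}"
  define A where "A = (UNIV :: 'a set) - {0}"
  define k where "k = (q - 1) * (q^2 + 1)"
  define g where "g = (\<lambda>z::'a. z ^ (q + 1))"
  have M0: "0 \<notin> M" unfolding M_def by simp
  have fib: "card {y\<in>A. g y = g x} = card M" if "x \<in> A" for x
  proof -
    have x0: "x \<noteq> 0" using that unfolding A_def by simp
    have "{y\<in>A. g y = g x} = (\<lambda>t. x * t) ` M"
    proof (rule set_eqI, rule iffI)
      fix y assume "y \<in> {y\<in>A. g y = g x}"
      then have e: "y ^ (q+1) = x ^ (q+1)" unfolding g_def by simp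
      have "(y / x) ^ (q + 1) = 1" using e x0 by (simp add: power_divide)
      moreover have "y = x * (y / x)" using x0 by simp
      ultimately show "y \<in> (\<lambda>t. x * t) ` M" unfolding M_def by blast
    next
      fix y assume "y \<in> (\<lambda>t. x * t) ` M"
      then obtain t where t: "t ^ (q+1) = 1" "y = x * t" unfolding M_def by blast
      then have "y \<noteq> 0" using x0 by auto
      then show "y \<in> {y\<in>A. g y = g x}" using t unfolding A_def g_def by (simp add: power_mult_distrib)
    qed
    moreover have "inj_on (\<lambda>t. x * t) M" using x0 by (simp add: inj_on_def)
    ultimately show ?thesis by (simp add: card_image)
  qed
  have c1: "card A = card M * card (g ` A)"
    by (rule fiber_card) (use fib in \<open>auto simp: A_def\<close>)
  have cA: "card A = q^4 - 1" unfolding A_def using cardE by (simp add: card_Diff_singleton)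
  have gA: "g ` A \<subseteq> {w. w ^ k + poly [:1:] w = 0}"
  proof
    fix w assume "w \<in> g ` A"
    then obtain z where z: "z \<noteq> 0" "w = z ^ (q+1)" unfolding A_def g_def by auto
    have "w ^ k = z ^ ((q + 1) * k)" using z by (simp only: power_mult)
    also have "\<dots> = z ^ (q^4 - 1)" using natid unfolding k_def by simp
    finally have "w ^ k = z ^ (q^4 - 1)" .
    also have "\<dots> = 1" using fermat[OF z(1)] cardE by simp
    finally show "w \<in> {w. w ^ k + poly [:1:] w = 0}" using two by simp
  qed
  have kpos: "k > 0" unfolding k_def using q2 by simp
  have ck: "card (g ` A) \<le> k"
    using le_trans[OF card_mono[OF _ gA] root_bound[of "[:1:]" k]] kpos by simp
  have cM: "card M \<le> q + 1"
  proof -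
    have "M = {t. t ^ (q+1) + poly [:1:] t = 0}" unfolding M_def by (simp add: sum0_iff)
    then show ?thesis using root_bound[of "[:1:]" "q+1"] by simp
  qed
  have "(q + 1) * k = card M * card (g ` A)" using c1 cA natid unfolding k_def by simp
  also have "\<dots> \<le> card M * k" using ck by simp
  finally have "(q + 1) * k \<le> card M * k" .
  then have "q + 1 \<le> card M" using kpos by (simp only: mult_le_cancel2)
  then show ?thesis using cM unfolding M_def by simp
qed

lemma main:
  fixes \<alpha> \<beta> :: 'a
  assumes bP: "\<beta> ^ (q^3+q^2+q+1) = 1"
    and hyp: "\<alpha> ^ (q + 1) = \<beta> ^ q + \<beta> ^ (q^2 + q + 1)"
  shows "card {x. x ^ (q + 1) + \<alpha> * x + \<beta> = 0} = q + 1
    \<and> {x. x ^ (q + 1) + \<alpha> * x + \<beta> = 0} \<subseteq> {x. x ^ (q^3+q^2+q+1) = 1}"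
proof -
  define Nn where "Nn = q^3+q^2+q+1"
  have Nnf: "Nn = (q+1) * (q^2+1)" unfolding Nn_def by (simp add: algebra_simps power2_eq_square power3_eq_cube)
  have b0: "\<beta> \<noteq> 0" using bP by (cases "\<beta> = 0") auto
  define \<delta> where "\<delta> = \<beta> ^ (q^2+1)"
  have \<delta>q: "\<delta> ^ (q+1) = 1"
  proof -
    have "\<delta> ^ (q+1) = \<beta> ^ ((q^2+1)*(q+1))" unfolding \<delta>_def by (simp only: power_mult)
    also have "(q^2+1)*(q+1) = Nn" unfolding Nnf by simp
    finally show ?thesis using bP unfolding Nn_def by simp
  qed
  have \<delta>0: "\<delta> \<noteq> 0" using b0 unfolding \<delta>_def by simp
  have hyp2: "\<alpha> ^ (q + 1) = \<beta> ^ q * (1 + \<delta>)"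
  proof -
    have "\<beta> ^ (q^2 + q + 1) = \<beta> ^ q * \<delta>" unfolding \<delta>_def
      by (simp add: power_add[symmetric] algebra_simps)
    then show ?thesis using hyp by (simp add: algebra_simps)
  qed
  obtain r where r: "q = 2 * r" using evq by blast
  have r1: "r \<ge> 1" using q2 r by simp
  show ?thesis
  proof (cases "\<alpha> = 0")
    case True
    have "\<beta> ^ q * (1 + \<delta>) = 0" using hyp2 True q2 by simp
    then have "1 + \<delta> = 0" using b0 by simp
    then have \<delta>1: "\<delta> = 1" using sum0_iff by simp
    have R: "{x. x ^ (q + 1) + \<alpha> * x + \<beta> = 0} = {x. x ^ (q+1) = \<beta>}"
      using True sum0_iff by simp
    obtain s where s: "r = Suc s" using r1 by (cases r) auto
    define e0 where "e0 = (2*s+1)*(2*s+2)*(s+1)"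
    define b where "b = \<beta> ^ e0"
    have ex: "e0 * (q+1) = 1 + (q^2+1) * (2*s*s+4*s+1)"
      unfolding e0_def r s by (simp add: algebra_simps power2_eq_square)
    have bb: "b ^ (q+1) = \<beta>"
    proof -
      have "b ^ (q+1) = \<beta> ^ (e0 * (q+1))" unfolding b_def by (simp only: power_mult)
      also have "\<dots> = \<beta> ^ (1 + (q^2+1) * (2*s*s+4*s+1))" unfolding ex ..
      also have "\<dots> = \<beta> * \<delta> ^ (2*s*s+4*s+1)" unfolding \<delta>_def by (simp only: power_add power_mult power_one_right)
      finally show ?thesis using \<delta>1 by simp
    qed
    have bnz: "b \<noteq> 0" unfolding b_def using b0 by simp
    have R2: "{x. x ^ (q+1) = \<beta>} = (\<lambda>z. b * z) ` {z. z ^ (q+1) = 1}"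
    proof (rule set_eqI, rule iffI)
      fix x assume "x \<in> {x. x ^ (q+1) = \<beta>}"
      then have "(x / b) ^ (q+1) = 1" "x = b * (x / b)" using bb bnz b0 by (auto simp: power_divide)
      then show "x \<in> (\<lambda>z. b * z) ` {z. z ^ (q+1) = 1}" by blast
    next
      fix x assume "x \<in> (\<lambda>z. b * z) ` {z. z ^ (q+1) = 1}"
      then show "x \<in> {x. x ^ (q+1) = \<beta>}" using bb by (auto simp: power_mult_distrib)
    qed
    have "card {x. x ^ (q+1) = \<beta>} = q + 1"
      unfolding R2 using mulcount bnz by (subst card_image) (auto simp: inj_on_def)
    moreover have "{x. x ^ (q+1) = \<beta>} \<subseteq> {x. x ^ (q^3+q^2+q+1) = 1}"
    proof
      fix x assume "x \<in> {x. x ^ (q+1) = \<beta>}"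
      then have "x ^ (q+1) = \<beta>" by simp
      then have "x ^ Nn = \<delta>" unfolding Nnf \<delta>_def by (simp only: power_mult)
      then show "x \<in> {x. x ^ (q^3+q^2+q+1) = 1}" using \<delta>1 unfolding Nn_def by simp
    qed
    ultimately show ?thesis using R by simp
  next
    case False
    have a0: "\<alpha> \<noteq> 0" using False .
    have \<delta>1: "\<delta> \<noteq> 1"
    proof
      assume "\<delta> = 1"
      then have "\<alpha> ^ (q+1) = 0" using hyp2 addself by simp
      then show False using a0 by simp
    qed
    define \<epsilon> where "\<epsilon> = \<delta> ^ (r + 1)"
    have \<epsilon>sq: "\<epsilon> ^ 2 = \<delta>"
    proof -
      have "\<epsilon> ^ 2 = \<delta> ^ (q + 1) * \<delta>" unfolding \<epsilon>_def r
        by (simp only: power_mult[symmetric] power_add[symmetric]) (simp add: algebra_simps)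
      then show ?thesis using \<delta>q by simp
    qed
    have \<epsilon>q1: "\<epsilon> ^ (q+1) = 1"
    proof -
      have "\<epsilon> ^ (q+1) = (\<delta> ^ (q+1)) ^ (r+1)" unfolding \<epsilon>_def
        by (simp only: power_mult[symmetric] mult.commute)
      then show ?thesis using \<delta>q by simp
    qed
    have e0: "\<epsilon> \<noteq> 0" using \<epsilon>sq \<delta>0 by auto
    have e1: "\<epsilon> \<noteq> 1" using \<epsilon>sq \<delta>1 by auto
    have \<epsilon>q: "\<epsilon> ^ q = inverse \<epsilon>"
    proof -
      have "\<epsilon> ^ q * \<epsilon> = 1" using \<epsilon>q1 by (simp add: mult.commute)
      then show ?thesis using e0 by (simp add: field_simps)
    qed
    have \<epsilon>qq: "\<epsilon> ^ (q^2) = \<epsilon>"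
      using \<epsilon>q e0 by (simp add: power2_eq_square power_mult power_inverse)
    have gam: "(1 + \<epsilon>) ^ 2 = 1 + \<delta>"
    proof -
      have "(1 + \<epsilon>) ^ 2 = 1 + \<epsilon>^2 + 2 * \<epsilon>" by (simp add: power2_eq_square algebra_simps)
      then show ?thesis using \<epsilon>sq two by simp
    qed
    have opq: "(1 + \<epsilon>) ^ q = 1 + inverse \<epsilon>" using frob[of 1 \<epsilon>] \<epsilon>q by simp
    define b where "b = \<beta> * (1 + \<epsilon>) / (\<alpha> * \<epsilon>)"
    have bq: "b ^ q = \<beta> ^ q * (1 + \<epsilon>) / \<alpha> ^ q"
    proof -
      have "b ^ q = \<beta> ^ q * (1 + \<epsilon>) ^ q / (\<alpha> ^ q * \<epsilon> ^ q)" unfolding b_def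
        by (simp add: power_divide power_mult_distrib)
      also have "\<dots> = \<beta> ^ q * (1 + inverse \<epsilon>) / (\<alpha> ^ q * inverse \<epsilon>)" using opq \<epsilon>q by simp
      also have "\<dots> = \<beta> ^ q * (1 + \<epsilon>) / \<alpha> ^ q" using e0 a0 by (simp add: field_simps)
      finally show ?thesis .
    qed
    have aq: "\<alpha> ^ (q+1) = \<alpha> ^ q * \<alpha>" by simp
    have A: "\<alpha> = b ^ q * (1 + \<epsilon>)"
    proof -
      have "b ^ q * (1 + \<epsilon>) = \<beta> ^ q * (1 + \<epsilon>)^2 / \<alpha> ^ q" unfolding bq by (simp add: power2_eq_square)
      also have "\<dots> = \<alpha> ^ (q+1) / \<alpha> ^ q" using gam hyp2 by simp
      also have "\<dots> = \<alpha>" using a0 by simp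
      finally show ?thesis by simp
    qed
    have B: "\<beta> = b ^ q * b * \<epsilon>"
    proof -
      have "b ^ q * b * \<epsilon> = (\<beta> ^ q * (1 + \<epsilon>) / \<alpha> ^ q) * (\<beta> * (1 + \<epsilon>) / (\<alpha> * \<epsilon>)) * \<epsilon>"
        by (subst bq) (simp only: b_def)
      also have "\<dots> = \<beta> ^ q * \<beta> * (1 + \<epsilon>)^2 / (\<alpha> ^ q * \<alpha>)"
        using e0 a0 by (simp add: power2_eq_square field_simps)
      also have "\<dots> = \<beta> * (\<beta> ^ q * (1 + \<epsilon>)^2) / (\<alpha> ^ q * \<alpha>)" by (simp add: algebra_simps)
      also have "\<beta> ^ q * (1 + \<epsilon>)^2 = \<alpha> ^ q * \<alpha>" using gam hyp2 aq by simp
      also have "\<beta> * (\<alpha> ^ q * \<alpha>) / (\<alpha> ^ q * \<alpha>) = \<beta>" using a0 by simp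
      finally show ?thesis by simp
    qed
    have bnz: "b \<noteq> 0" using B b0 by auto
    have bN: "b ^ Nn = 1"
    proof -
      have "b ^ Nn = (b ^ q * b) ^ (q^2+1)" unfolding Nnf by (simp only: power_mult power_Suc2 add.commute[of q 1] power_add power_one_right) (simp add: mult.commute)
      also have "b ^ q * b = \<beta> / \<epsilon>" using B e0 by (simp add: field_simps)
      also have "(\<beta> / \<epsilon>) ^ (q^2+1) = \<delta> / (\<epsilon> ^ (q^2) * \<epsilon>)" unfolding \<delta>_def by (simp add: power_divide)
      also have "\<epsilon> ^ (q^2) * \<epsilon> = \<delta>" using \<epsilon>qq \<epsilon>sq by (simp add: power2_eq_square)
      finally show ?thesis using \<delta>0 by simp
    qed
    define u where "u = 1 + inverse \<epsilon>"
    have uq0: "u ^ q = 1 + \<epsilon>"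
    proof -
      have "u ^ q = 1 ^ q + inverse \<epsilon> ^ q" unfolding u_def by (rule frob)
      also have "inverse \<epsilon> ^ q = inverse (\<epsilon> ^ q)" by (rule power_inverse)
      also have "\<dots> = \<epsilon>" using \<epsilon>q by simp
      finally show ?thesis by simp
    qed
    have "\<epsilon> * u = 1 + \<epsilon>" unfolding u_def using e0 by (simp add: field_simps)
    then have uq: "u ^ q = \<epsilon> * u" using uq0 by simp
    have unz: "u \<noteq> 0"
    proof
      assume "u = 0"
      then have "inverse \<epsilon> = 1" unfolding u_def using sum0_iff by simp
      then show False using e1 by (simp add: inverse_eq_iff_eq)
    qed
    have uqq: "u ^ (q^2) = u"
    proof -
      have "u ^ (q^2) = (1 + \<epsilon>) ^ q" using uq0 by (simp add: power2_eq_square power_mult)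
      then show ?thesis using opq unfolding u_def by simp
    qed
    have uqqq: "u ^ (q^3) = u ^ q"
    proof -
      have "u ^ (q^3) = (u ^ (q^2)) ^ q" by (simp add: power3_eq_cube power2_eq_square power_mult)
      then show ?thesis using uqq by simp
    qed
    have "u ^ (q^3) + u ^ (q^2) + u ^ q + u = 0"
      unfolding uqqq uqq using addself by (simp add: algebra_simps two)
    then obtain c where c: "c ^ q + c = u" using addcount(2) by blast
    define S where "S = {Y. Y ^ q + Y = u}"
    have S: "S = (\<lambda>t. c + t) ` {t. t ^ q = t}"
    proof (rule set_eqI, rule iffI)
      fix Y assume "Y \<in> S"
      then have "Y ^ q + Y = c ^ q + c" unfolding S_def using c by simp
      then have "(Y ^ q + Y) + (c ^ q + c) = 0" using sum0_iff by blast
      then have "(Y ^ q + c ^ q) + (Y + c) = 0" by (simp add: algebra_simps)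
      then have "(Y + c) ^ q = Y + c" using frob sum0_iff by simp
      moreover have "Y = c + (Y + c)" by (metis add.assoc add.commute addself add_0)
      ultimately show "Y \<in> (\<lambda>t. c + t) ` {t. t ^ q = t}" by blast
    next
      fix Y assume "Y \<in> (\<lambda>t. c + t) ` {t. t ^ q = t}"
      then obtain t where t: "t ^ q = t" "Y = c + t" by blast
      have "Y ^ q + Y = (c ^ q + c) + (t ^ q + t)" using t frob by (simp add: algebra_simps)
      also have "t ^ q + t = 0" using t(1) addself by simp
      finally show "Y \<in> S" unfolding S_def using c by simp
    qed
    have cS: "card S = q" unfolding S using addcount(1) by (subst card_image) (auto simp: inj_on_def)
    have S0: "0 \<notin> S"
    proof -
      have "(0::'a) ^ q = 0" using q2 by simp
      then show ?thesis unfolding S_def using unz by (auto simp: power_0_left)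
    qed
    define f where "f = (\<lambda>x. x ^ (q + 1) + \<alpha> * x + \<beta>)"
    have fexp: "f (b + D) = b ^ q * \<epsilon> * D + b * D ^ q + D ^ q * D" for D
    proof -
      have "f (b + D) = (b ^ q + D ^ q) * (b + D) + b ^ q * (1 + \<epsilon>) * (b + D) + b ^ q * b * \<epsilon>"
        unfolding f_def using frob[of b D] A B by (simp add: mult.commute)
      also have "\<dots> = b ^ q * \<epsilon> * D + b * D ^ q + D ^ q * D + 2 * (b ^ q * b + b ^ q * D + b ^ q * b * \<epsilon>)"
        by (simp add: algebra_simps)
      finally show ?thesis using two by simp
    qed
    have key: "Y ^ q * Y * f (b + D) = b ^ q * b * \<epsilon> * u * (Y ^ q + Y + u)"
      if h1: "D * Y = b * u" for D Y
    proof -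
      have h2: "D ^ q * Y ^ q = b ^ q * (\<epsilon> * u)" using h1 uq by (metis power_mult_distrib)
      have "Y ^ q * Y * f (b + D) = b ^ q * \<epsilon> * (D * Y) * Y ^ q + b * (D ^ q * Y ^ q) * Y + (D ^ q * Y ^ q) * (D * Y)"
        unfolding fexp by (simp add: algebra_simps)
      also have "\<dots> = b ^ q * b * \<epsilon> * u * (Y ^ q + Y + u)" unfolding h1 h2 by (simp add: algebra_simps)
      finally show ?thesis .
    qed
    define g where "g = (\<lambda>Y. b + b * u / Y)"
    have R: "{x. f x = 0} = insert b (g ` S)"
    proof (rule set_eqI, rule iffI)
      fix x assume "x \<in> {x. f x = 0}"
      then have fx: "f x = 0" by simp
      show "x \<in> insert b (g ` S)"
      proof (cases "x = b")
        case True then show ?thesis by simp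
      next
        case False
        define D where "D = x - b"
        have D0: "D \<noteq> 0" using False unfolding D_def by simp
        define Y where "Y = b * u / D"
        have h1: "D * Y = b * u" unfolding Y_def using D0 by simp
        have xD: "x = b + D" unfolding D_def by simp
        have "b ^ q * b * \<epsilon> * u * (Y ^ q + Y + u) = 0" using key[OF h1] fx xD by simp
        then have "Y ^ q + Y + u = 0" using bnz e0 unz by simp
        then have "Y \<in> S" unfolding S_def using sum0_iff by simp
        moreover have "g Y = x" unfolding g_def Y_def xD using D0 bnz unz by simp
        ultimately show ?thesis by blast
      qed
    next
      fix x assume "x \<in> insert b (g ` S)"
      then show "x \<in> {x. f x = 0}"
      proof
        assume "x = b"
        then show ?thesis using fexp[of 0] q2 by simp
      next
        assume "x \<in> g ` S"
        then obtain Y where Y: "Y \<in> S" "x = g Y" by blast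
        have Y0: "Y \<noteq> 0" using Y S0 by auto
        have h1: "(b * u / Y) * Y = b * u" using Y0 by simp
        have "Y ^ q + Y + u = 0" using Y unfolding S_def using addself by simp
        then have "Y ^ q * Y * f x = 0" using key[OF h1] Y unfolding g_def by simp
        then show ?thesis using Y0 by simp
      qed
    qed
    have bg: "b \<notin> g ` S" unfolding g_def using bnz unz S0 by auto
    have ginj: "inj_on g S" unfolding g_def inj_on_def using bnz unz S0 by auto
    have card1: "card {x. f x = 0} = q + 1"
      unfolding R using bg ginj cS by (simp add: card_image)
    have sub: "{x. f x = 0} \<subseteq> {x. x ^ (q^3+q^2+q+1) = 1}"
    proof
      fix x assume "x \<in> {x. f x = 0}"
      then have "x = b \<or> x \<in> g ` S" using R by auto
      then have "x ^ Nn = 1"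
      proof
        assume "x = b" then show ?thesis using bN by simp
      next
        assume "x \<in> g ` S"
        then obtain Y where Y: "Y \<in> S" "x = g Y" by blast
        have Y0: "Y \<noteq> 0" using Y S0 by auto
        have "Y ^ q + Y + u = 0" using Y addself unfolding S_def by simp
        then have "Y ^ q + (Y + u) = 0" by (simp add: add.assoc)
        then have "Y ^ q = Y + u" using sum0_iff by blast
        then have xY: "x = b * Y ^ q / Y" unfolding Y(2) g_def using Y0 by (simp add: field_simps)
        obtain s where s: "q = Suc s" using q2 by (cases q) auto
        have e: "q * Nn = (q^4 - 1) + Nn" unfolding Nn_def s
          by (simp add: algebra_simps power2_eq_square power3_eq_cube power4_eq_xxxx)
        have "(Y ^ q) ^ Nn = Y ^ (q^4 - 1) * Y ^ Nn" by (simp only: power_mult[symmetric] e power_add)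
        also have "Y ^ (q^4 - 1) = 1" using fermat[OF Y0] cardE by simp
        finally have "(Y ^ q) ^ Nn = Y ^ Nn" by simp
        then show ?thesis unfolding xY using bN Y0 by (simp add: power_divide power_mult_distrib)
      qed
      then show "x \<in> {x. x ^ (q^3+q^2+q+1) = 1}" unfolding Nn_def by simp
    qed
    show ?thesis using card1 sub unfolding f_def by simp
  qed
qed

end

theorem lemma2p3:
  fixes m q :: nat and \<alpha> \<beta> :: "'a::{field,finite}"
  assumes "m \<ge> 1" and "q = 2 ^ m"
    and "card (UNIV :: 'a set) = q ^ 4"
    and "\<beta> \<in> P_set q"
    and "\<alpha> ^ (q + 1) = \<beta> ^ q + \<beta> ^ (q^2 + q + 1)"
  shows "card {x :: 'a. x ^ (q + 1) + \<alpha> * x + \<beta> = 0} = q + 1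
    \<and> {x :: 'a. x ^ (q + 1) + \<alpha> * x + \<beta> = 0} \<subseteq> P_set q"
proof -
  have bP: "\<beta> ^ (q^3+q^2+q+1) = 1" using assms(4) unfolding P_set_def by simp
  show ?thesis using main[OF assms(1) assms(2) assms(3) bP assms(5)] unfolding P_set_def by simp
qed

end
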